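(* For every deterministic KAT automaton $A$ over $(\Sigma,T)$, there exist $k>0$ and maps $\mathfrak{s},\mathfrak{t}$ (with $\mathfrak{t}:T_k\to\mathsf{BA}(T)$ and $\mathfrak{s}$ assigning to each $p\in\Sigma_k$ a deterministic KAT automaton over $(\Sigma,T)$) such that $L(A)=L(\mathsf{compose}^{\mathfrak{s}}_{\mathfrak{t}}(A_k))$, where $A_k$ is the free automaton with $k$ states, and for all $p\in\Sigma_k$, $L(\mathfrak{s}(p))=L(p')$ for some $p'\in\Sigma$.
   Context: Atoms $\mathsf{At}_T=2^T$ for a finite test set $T$; $\mathsf{BA}(T)$ are Boolean expressions over $T$; $\alpha\le b$ means $b$ holds under the assignment making exactly the tests in $\alpha$ true. Guarded strings: words in $\mathsf{At}_T(\Sigma\mathsf{At}_T)^*$. For a primitive action $p$, $L(p)=\{\alpha p\beta:\alpha,\beta\in\mathsf{At}_T\}$. A deterministic KAT automaton over $(\Sigma,T)$ is $A=(Q,\delta,\iota)$ with $Q$ finite, $\delta:Q\times\mathsf{At}_T\to\{\mathsf{accept},\mathsf{reject}\}+\Sigma\times Q$, $\iota:\mathsf{At}_T\to\{\mathsf{accept},\mathsf{reject}\}+\Sigma\times Q$. For $\gamma:\mathsf{At}_T\to\{\mathsf{accept},\mathsf{reject}\}+\Sigma\times Q$, $L_A(\gamma)$ is the smallest set such that $\gamma(\alpha)=\mathsf{accept}$ implies $\alpha\in L_A(\gamma)$, and $\gamma(\alpha)=(p,q)$, $w\in L_A(\delta(q,-))$ imply $\alpha pw\in L_A(\gamma)$.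 $L(A)=L_A(\iota)$. Composition. (1) For $\mathfrak{t}:T_0\to\mathsf{BA}(T_1)$ and $A=(Q,\delta,\iota)$ over $(\Sigma,T_0)$: for $\beta\in\mathsf{At}_{T_1}$ let $\mathfrak{t}^{-1}(\beta)\in\mathsf{At}_{T_0}$ be the atom with $t\in\mathfrak{t}^{-1}(\beta)$ iff $\beta\le\mathfrak{t}(t)$; $\mathsf{compose}_{\mathfrak{t}}(A)=(Q,\delta',\iota')$ over $(\Sigma,T_1)$ with $\delta'(q,\beta)=\delta(q,\mathfrak{t}^{-1}(\beta))$, $\iota'(\beta)=\iota(\mathfrak{t}^{-1}(\beta))$. (2) For $A=(Q,\delta,\iota)$ over $(\Sigma_0,T)$ and $\mathfrak{s}$ assigning to each $p\in\Sigma_0$ an automaton $\mathfrak{s}(p)=(Q_p,\delta_p,\iota_p)$ over $(\Sigma_1,T)$: define $\hat\delta(q,\alpha)$ by: $\mathsf{accept}$ if $\delta(q,\alpha)=\mathsf{accept}$; $(p,q')$ if $\delta(q,\alpha)=(p,q')$ and $\iota_p(\alpha)\ne\mathsf{accept}$; $\hat\delta(q',\alpha)$ if $\delta(q,\alpha)=(p,q')$ and $\iota_p(\alpha)=\mathsf{accept}$; $\mathsf{reject}$ otherwise (including when this recursion never terminates). Define $\hat\iota(\alpha)=\hat\delta(q,\alpha)$ if $\iota(\alpha)=(p,q)$ and $\iota_p(\alpha)=\mathsf{accept}$, and $\hat\iota(\alpha)=\iota(\alpha)$ otherwise. Then $\mathsf{compose}^{\mathfrak{s}}(A)=(Q',\delta',\iota')$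 over $(\Sigma_1,T)$ with $Q'=\sum_{p\in\Sigma_0}Q_p\times Q$ (disjoint union), and for $q_p\in Q_p$, $q\in Q$: $\delta'((q_p,q),\alpha)=(p'',(q_p',q))$ if $\delta_p(q_p,\alpha)=(p'',q_p')$; $=(p'',(q_{p'},q'))$ if $\delta_p(q_p,\alpha)=\mathsf{accept}$, $\hat\delta(q,\alpha)=(p',q')$ and $\iota_{p'}(\alpha)=(p'',q_{p'})$; $=\mathsf{accept}$ if $\delta_p(q_p,\alpha)=\mathsf{accept}$ and $\hat\delta(q,\alpha)=\mathsf{accept}$; $=\mathsf{reject}$ otherwise. $\iota'(\alpha)=\mathsf{accept}$ if $\hat\iota(\alpha)=\mathsf{accept}$; $=(p'',(q_{p'},q))$ if $\hat\iota(\alpha)=(p',q)$ and $\iota_{p'}(\alpha)=(p'',q_{p'})$; $=\mathsf{reject}$ otherwise. (3) $\mathsf{compose}^{\mathfrak{s}}_{\mathfrak{t}}(A)=\mathsf{compose}^{\mathfrak{s}}(\mathsf{compose}_{\mathfrak{t}}(A))$. Free automaton with $k$ states: $A_k=(Q,\delta,\iota)$ over actions $\Sigma_k=\{p_1,\dots,p_k\}$ and tests $T_k=\{t_{i,j}:0\le i,j\le k\}$, $Q=\{q_1,\dots,q_k\}$. For $0\le i,j\le k$ let $b_{i,j}\in\mathsf{BA}(T_k)$ be the test that holds when $t_{i,j}$ is true and $t_{i,m}$ is false for all $m<j$ (so for fixed $i$ the $b_{i,j}$ are mutually exclusive). Then $\delta(q_i,\alpha)=\mathsf{accept}$ if $\alpha\le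 b_{i,0}$, $=(p_j,q_j)$ if $\alpha\le b_{i,j}$ ($1\le j\le k$), $=\mathsf{reject}$ otherwise; $\iota(\alpha)=\mathsf{accept}$ if $\alpha\le b_{0,0}$, $=(p_j,q_j)$ if $\alpha\le b_{0,j}$ ($1\le j\le k$), $=\mathsf{reject}$ otherwise. *)

theory Defs
  imports Main
begin

datatype 't bexp = BTest 't | BTrue | BFalse | BNot "'t bexp"
  | BAnd "'t bexp" "'t bexp" | BOr "'t bexp" "'t bexp"

text \<open>An atom over the test set T is a subset of T (the tests that are true).
  \<open>holds \<alpha> b\<close> is the relation \<alpha> \<le> b.\<close>
fun holds :: "'t set \<Rightarrow> 't bexp \<Rightarrow> bool" where
  "holds \<alpha> (BTest t) = (t \<in> \<alpha>)"
| "holds \<alpha> BTrue = True"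
| "holds \<alpha> BFalse = False"
| "holds \<alpha> (BNot b) = (\<not> holds \<alpha> b)"
| "holds \<alpha> (BAnd b c) = (holds \<alpha> b \<and> holds \<alpha> c)"
| "holds \<alpha> (BOr b c) = (holds \<alpha> b \<or> holds \<alpha> c)"

fun bvars :: "'t bexp \<Rightarrow> 't set" where
  "bvars (BTest t) = {t}"
| "bvars BTrue = {}"
| "bvars BFalse = {}"
| "bvars (BNot b) = bvars b"
| "bvars (BAnd b c) = bvars b \<union> bvars c"
| "bvars (BOr b c) = bvars b \<union> bvars c"

definition atoms :: "'t set \<Rightarrow> 't set set" where
  "atoms T = Pow T"

text \<open>\<open>(\<alpha>0, [(p1,\<alpha>1),...,(pn,\<alpha>n)])\<close> represents \<alpha>0 p1 \<alpha>1 ... pn \<alpha>n.\<close>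
type_synonym ('a,'t) gstring = "'t set \<times> ('a \<times> 't set) list"

definition prim_lang :: "'t set \<Rightarrow> 'a \<Rightarrow> ('a,'t) gstring set" where
  "prim_lang T p = {(\<alpha>, [(p, \<beta>)]) | \<alpha> \<beta>. \<alpha> \<in> atoms T \<and> \<beta> \<in> atoms T}"

datatype ('a,'q) res = Accept | Reject | Step 'a 'q

record ('a,'q,'t) kat_aut =
  states :: "'q set"
  trans :: "'q \<Rightarrow> 't set \<Rightarrow> ('a,'q) res"
  init :: "'t set \<Rightarrow> ('a,'q) res"

definition res_ok :: "'a set \<Rightarrow> 'q set \<Rightarrow> ('a,'q) res \<Rightarrow> bool" where
  "res_ok \<Sigma> Q r = (\<forall>p q. r = Step p q \<longrightarrow> p \<in> \<Sigma> \<and> q \<in> Q)"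

definition wf_aut :: "'a set \<Rightarrow> 't set \<Rightarrow> ('a,'q,'t) kat_aut \<Rightarrow> bool" where
  "wf_aut \<Sigma> T A = (finite (states A)
     \<and> (\<forall>\<alpha>\<in>atoms T. res_ok \<Sigma> (states A) (init A \<alpha>))
     \<and> (\<forall>q\<in>states A. \<forall>\<alpha>\<in>atoms T. res_ok \<Sigma> (states A) (trans A q \<alpha>)))"

inductive lang_from :: "'t set \<Rightarrow> ('q \<Rightarrow> 't set \<Rightarrow> ('a,'q) res)
    \<Rightarrow> ('t set \<Rightarrow> ('a,'q) res) \<Rightarrow> ('a,'t) gstring \<Rightarrow> bool"
  for T \<delta> where
  acc: "\<alpha> \<in> atoms T \<Longrightarrow> \<gamma> \<alpha> = Accept \<Longrightarrow> lang_from T \<delta> \<gamma> (\<alpha>, [])"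
| step: "\<alpha> \<in> atoms T \<Longrightarrow> \<gamma> \<alpha> = Step p q \<Longrightarrow> lang_from T \<delta> (\<delta> q) w
          \<Longrightarrow> lang_from T \<delta> \<gamma> (\<alpha>, (p, fst w) # snd w)"

definition lang :: "'t set \<Rightarrow> ('a,'q,'t) kat_aut \<Rightarrow> ('a,'t) gstring set" where
  "lang T A = {w. lang_from T (trans A) (init A) w}"

definition tinv :: "'s set \<Rightarrow> ('s \<Rightarrow> 't bexp) \<Rightarrow> 't set \<Rightarrow> 's set" where
  "tinv T0 tt \<beta> = {t \<in> T0. holds \<beta> (tt t)}"

definition compose_t :: "'s set \<Rightarrow> ('s \<Rightarrow> 't bexp) \<Rightarrow> ('a,'q,'s) kat_aut \<Rightarrow> ('a,'q,'t) kat_aut" where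
  "compose_t T0 tt A = \<lparr> states = states A,
      trans = (\<lambda>q \<beta>. trans A q (tinv T0 tt \<beta>)),
      init = (\<lambda>\<beta>. init A (tinv T0 tt \<beta>)) \<rparr>"

text \<open>\<open>hat_rel A s q \<alpha> r\<close>: the terminating computation of \<open>\<delta>^(q,\<alpha>)\<close> yields r.\<close>
inductive hat_rel :: "('b,'q,'t) kat_aut \<Rightarrow> ('b \<Rightarrow> ('c,'r,'t) kat_aut)
    \<Rightarrow> 'q \<Rightarrow> 't set \<Rightarrow> ('b,'q) res \<Rightarrow> bool" for A s where
  h_acc: "trans A q \<alpha> = Accept \<Longrightarrow> hat_rel A s q \<alpha> Accept"
| h_step: "trans A q \<alpha> = Step p q' \<Longrightarrow> init (s p) \<alpha> \<noteq> Accept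
            \<Longrightarrow> hat_rel A s q \<alpha> (Step p q')"
| h_skip: "trans A q \<alpha> = Step p q' \<Longrightarrow> init (s p) \<alpha> = Accept
            \<Longrightarrow> hat_rel A s q' \<alpha> r \<Longrightarrow> hat_rel A s q \<alpha> r"

text \<open>Reject when the recursion never terminates or hits reject.\<close>
definition hat_delta :: "('b,'q,'t) kat_aut \<Rightarrow> ('b \<Rightarrow> ('c,'r,'t) kat_aut)
    \<Rightarrow> 'q \<Rightarrow> 't set \<Rightarrow> ('b,'q) res" where
  "hat_delta A s q \<alpha> = (if \<exists>r. hat_rel A s q \<alpha> r then (THE r. hat_rel A s q \<alpha> r) else Reject)"

definition hat_iota :: "('b,'q,'t) kat_aut \<Rightarrow> ('b \<Rightarrow> ('c,'r,'t) kat_aut)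
    \<Rightarrow> 't set \<Rightarrow> ('b,'q) res" where
  "hat_iota A s \<alpha> = (case init A \<alpha> of
      Step p q \<Rightarrow> (if init (s p) \<alpha> = Accept then hat_delta A s q \<alpha> else init A \<alpha>)
    | _ \<Rightarrow> init A \<alpha>)"

text \<open>States of the composite: \<open>(p, q_p, q)\<close> encodes the element \<open>(q_p,q)\<close> of the
  p-th summand \<open>Q_p \<times> Q\<close> of the disjoint union.\<close>
definition compose_s :: "'b set \<Rightarrow> ('b \<Rightarrow> ('c,'r,'t) kat_aut) \<Rightarrow> ('b,'q,'t) kat_aut
    \<Rightarrow> ('c, 'b \<times> 'r \<times> 'q, 't) kat_aut" where
  "compose_s \<Sigma>0 s A = \<lparr>
     states = {(p, qp, q). p \<in> \<Sigma>0 \<and> qp \<in> states (s p) \<and> q \<in> states A},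
     trans = (\<lambda>(p, qp, q) \<alpha>.
        case trans (s p) qp \<alpha> of
          Step p'' qp' \<Rightarrow> Step p'' (p, qp', q)
        | Accept \<Rightarrow> (case hat_delta A s q \<alpha> of
              Step p' q' \<Rightarrow> (case init (s p') \<alpha> of
                   Step p'' qp' \<Rightarrow> Step p'' (p', qp', q')
                 | _ \<Rightarrow> Reject)
            | Accept \<Rightarrow> Accept
            | Reject \<Rightarrow> Reject)
        | Reject \<Rightarrow> Reject),
     init = (\<lambda>\<alpha>. case hat_iota A s \<alpha> of
          Accept \<Rightarrow> Accept
        | Step p' q \<Rightarrow> (case init (s p') \<alpha> of
              Step p'' qp \<Rightarrow> Step p'' (p', qp, q)
            | _ \<Rightarrow> Reject)
        | Reject \<Rightarrow> Reject) \<rparr>"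

definition compose_st :: "'b set \<Rightarrow> 's set \<Rightarrow> ('b \<Rightarrow> ('c,'r,'t) kat_aut) \<Rightarrow> ('s \<Rightarrow> 't bexp)
    \<Rightarrow> ('b,'q,'s) kat_aut \<Rightarrow> ('c, 'b \<times> 'r \<times> 'q, 't) kat_aut" where
  "compose_st \<Sigma>0 T0 s tt A = compose_s \<Sigma>0 s (compose_t T0 tt A)"

text \<open>Actions p_1..p_k are 1..k, states q_1..q_k are 1..k, test t_{i,j} is (i,j).\<close>
definition free_tests :: "nat \<Rightarrow> (nat \<times> nat) set" where
  "free_tests k = {(i, j). i \<le> k \<and> j \<le> k}"

definition free_b :: "nat \<Rightarrow> nat \<Rightarrow> (nat \<times> nat) bexp" where
  "free_b i j = BAnd (BTest (i, j)) (foldr (\<lambda>m b. BAnd (BNot (BTest (i, m))) b) [0..<j] BTrue)"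

definition free_gamma :: "nat \<Rightarrow> nat \<Rightarrow> (nat \<times> nat) set \<Rightarrow> (nat, nat) res" where
  "free_gamma k i \<alpha> = (if holds \<alpha> (free_b i 0) then Accept
     else if \<exists>j\<in>{1..k}. holds \<alpha> (free_b i j)
       then (let j = (LEAST j. j \<in> {1..k} \<and> holds \<alpha> (free_b i j)) in Step j j)
     else Reject)"

definition free_aut :: "nat \<Rightarrow> (nat, nat, nat \<times> nat) kat_aut" where
  "free_aut k = \<lparr> states = {1..k}, trans = (\<lambda>i \<alpha>. free_gamma k i \<alpha>),
                  init = free_gamma k 0 \<rparr>"

end

theory Submission
  imports Defs
begin

definition atom_exp :: "'t list \<Rightarrow> 't set \<Rightarrow> 't bexp" where
  "atom_exp ts \<beta> = foldr (\<lambda>t b. BAnd (if t \<in> \<beta> then BTest t else BNot (BTest t)) b) ts BTrue"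

lemma holds_atom_exp: "holds \<alpha> (atom_exp ts \<beta>) = (\<forall>t\<in>set ts. (t \<in> \<alpha>) = (t \<in> \<beta>))"
  unfolding atom_exp_def by (induction ts) auto

lemma bvars_atom_exp: "bvars (atom_exp ts \<beta>) \<subseteq> set ts"
  unfolding atom_exp_def by (induction ts) auto

lemma holds_set_exp:
  "holds \<alpha> (foldr (\<lambda>\<beta> b. BOr (atom_exp ts \<beta>) b) bs BFalse) = (\<exists>\<beta>\<in>set bs. holds \<alpha> (atom_exp ts \<beta>))"
  by (induction bs) auto

lemma bvars_set_exp:
  "bvars (foldr (\<lambda>\<beta> b. BOr (atom_exp ts \<beta>) b) bs BFalse) \<subseteq> set ts"
proof (induction bs)
  case (Cons a bs)
  then show ?case using bvars_atom_exp[of ts a] by simp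
qed simp

lemma exists_bexp:
  assumes "finite T"
  shows "\<exists>b. bvars b \<subseteq> T \<and> (\<forall>\<alpha>\<in>atoms T. holds \<alpha> b = P \<alpha>)"
proof -
  obtain ts where ts: "set ts = T" using finite_list[OF assms] by metis
  have "finite {\<alpha>\<in>Pow T. P \<alpha>}" using assms by simp
  then obtain bs where bs: "set bs = {\<alpha>\<in>Pow T. P \<alpha>}" using finite_list by metis
  let ?b = "foldr (\<lambda>\<beta> b. BOr (atom_exp ts \<beta>) b) bs BFalse"
  have "\<forall>\<alpha>\<in>atoms T. holds \<alpha> ?b = P \<alpha>"
  proof
    fix \<alpha> assume a: "\<alpha> \<in> atoms T"
    have eq: "(\<forall>t\<in>set ts. (t \<in> \<alpha>) = (t \<in> \<beta>)) = (\<alpha> = \<beta>)" if "\<beta> \<in> set bs" for \<beta>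
    proof -
      have "\<alpha> \<subseteq> T" "\<beta> \<subseteq> T" using a that bs unfolding atoms_def by auto
      then show ?thesis unfolding ts by blast
    qed
    have "holds \<alpha> ?b = (\<exists>\<beta>\<in>set bs. \<alpha> = \<beta>)"
      unfolding holds_set_exp holds_atom_exp by (rule bex_cong[OF refl]) (rule eq)
    also have "\<dots> = (\<alpha> \<in> set bs)" by blast
    also have "\<dots> = P \<alpha>" using a bs unfolding atoms_def by auto
    finally show "holds \<alpha> ?b = P \<alpha>" .
  qed
  moreover have "bvars ?b \<subseteq> T" using bvars_set_exp ts by metis
  ultimately show ?thesis by blast
qed

lemma holds_fold_not:
  "holds \<alpha> (foldr (\<lambda>m b. BAnd (BNot (BTest (i, m))) b) ms BTrue) = (\<forall>m\<in>set ms. (i,m) \<notin> \<alpha>)"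
  by (induction ms) auto

lemma holds_free_b: "holds \<alpha> (free_b i j) = ((i,j)\<in>\<alpha> \<and> (\<forall>m<j. (i,m)\<notin>\<alpha>))"
  by (auto simp add: free_b_def holds_fold_not)

lemma free_gamma_code:
  assumes "\<forall>j\<le>k. ((i,j)\<in>\<alpha>) = (c = j)"
  shows "free_gamma k i \<alpha> = (if c = 0 then Accept else if c \<le> k then Step c c else Reject)"
proof -
  have h0: "holds \<alpha> (free_b i 0) = (c = 0)" using assms by (simp add: holds_free_b)
  have hj: "\<And>j. j \<in> {1..k} \<Longrightarrow> holds \<alpha> (free_b i j) = (c = j)"
    using assms by (auto simp add: holds_free_b)
  show ?thesis
  proof (cases "c = 0")
    case True then show ?thesis using h0 by (simp add: free_gamma_def)
  next
    case False
    show ?thesis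
    proof (cases "c \<le> k")
      case True
      have ex: "\<exists>j\<in>{1..k}. holds \<alpha> (free_b i j)" using hj[of c] True False by auto
      have "(LEAST j. j \<in> {1..k} \<and> holds \<alpha> (free_b i j)) = c"
        by (rule Least_equality) (use hj True False in auto)
      then show ?thesis using h0 False True ex by (simp add: free_gamma_def Let_def)
    next
      case F2: False
      have "\<not> (\<exists>j\<in>{1..k}. holds \<alpha> (free_b i j))" using hj F2 by auto
      then show ?thesis using h0 False F2 by (simp add: free_gamma_def)
    qed
  qed
qed

lemma hat_rel_noskip:
  assumes "\<forall>p \<alpha>. init (s p) \<alpha> \<noteq> Accept"
  shows "hat_rel A s q \<alpha> r \<Longrightarrow> r = trans A q \<alpha> \<and> r \<noteq> Reject"
  by (induction rule: hat_rel.induct) (use assms in auto)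

lemma hat_delta_noskip:
  assumes "\<forall>p \<alpha>. init (s p) \<alpha> \<noteq> Accept"
  shows "hat_delta A s q \<alpha> = trans A q \<alpha>"
proof (cases "trans A q \<alpha>")
  case Accept
  then have "hat_rel A s q \<alpha> Accept" by (rule h_acc)
  then show ?thesis using hat_rel_noskip[OF assms] Accept unfolding hat_delta_def
    by (metis (no_types, lifting) the_equality)
next
  case Reject
  then show ?thesis using hat_rel_noskip[OF assms, of A q \<alpha>] unfolding hat_delta_def by auto
next
  case (Step p q')
  then have "hat_rel A s q \<alpha> (Step p q')" using assms by (intro h_step) auto
  then show ?thesis using hat_rel_noskip[OF assms] Step unfolding hat_delta_def
    by (metis (no_types, lifting) the_equality)
qed

lemma hat_iota_noskip:
  assumes "\<forall>p \<alpha>. init (s p) \<alpha> \<noteq> Accept"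
  shows "hat_iota A s \<alpha> = init A \<alpha>"
  using assms by (simp add: hat_iota_def split: res.split)

lemma single_aut:
  fixes a :: 'a and T :: "'t set"
  defines "B \<equiv> \<lparr>states = {1::nat}, trans = \<lambda>_ _. Accept, init = \<lambda>_. Step a 1\<rparr>"
  shows "wf_aut UNIV T B \<and> lang T B = prim_lang T a"
proof
  show "wf_aut UNIV T B" by (simp add: B_def wf_aut_def res_ok_def)
  have inner: "lang_from T (trans B) g w \<Longrightarrow> g = (\<lambda>_. Accept) \<Longrightarrow> snd w = [] \<and> fst w \<in> atoms T" for g w
    by (induction rule: lang_from.induct) auto
  show "lang T B = prim_lang T a"
  proof (rule set_eqI, rule iffI)
    fix w assume "w \<in> lang T B"
    then have "lang_from T (trans B) (init B) w" by (simp add: lang_def)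
    then show "w \<in> prim_lang T a"
    proof (cases rule: lang_from.cases)
      case (step \<alpha> p q w')
      have "snd w' = [] \<and> fst w' \<in> atoms T" using inner[OF step(4)] by (simp add: B_def)
      then show ?thesis using step by (auto simp add: B_def prim_lang_def)
    qed (simp add: B_def)
  next
    fix w assume "w \<in> prim_lang T a"
    then obtain \<alpha> \<beta> where w: "w = (\<alpha>, [(a, \<beta>)])" "\<alpha> \<in> atoms T" "\<beta> \<in> atoms T"
      by (auto simp add: prim_lang_def)
    have "lang_from T (trans B) (trans B 1) (\<beta>, [])" using w by (intro lang_from.acc) (auto simp: B_def)
    then have "lang_from T (trans B) (init B) (\<alpha>, (a, fst (\<beta>, ([]::('a \<times> 't set) list))) # snd (\<beta>, ([]::('a \<times> 't set) list)))"
      using w by (intro lang_from.step[where q=1]) (auto simp: B_def)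
    then show "w \<in> lang T B" using w by (simp add: lang_def)
  qed
qed


theorem proposition7p2:
  fixes T :: "'t set" and A :: "('a, 'q, 't) kat_aut"
  assumes "finite T" and "wf_aut UNIV T A"
  shows "\<exists>k > 0. \<exists>(tt :: nat \<times> nat \<Rightarrow> 't bexp) (s :: nat \<Rightarrow> ('a, nat, 't) kat_aut).
           (\<forall>x \<in> free_tests k. bvars (tt x) \<subseteq> T)
         \<and> (\<forall>p \<in> {1..k}. wf_aut UNIV T (s p) \<and> (\<exists>p'. lang T (s p) = prim_lang T p'))
         \<and> lang T A = lang T (compose_st {1..k} (free_tests k) s tt (free_aut k))"
proof -
  note wf = assms(2)
  define R where "R = {(p,q'). \<exists>\<alpha>\<in>atoms T. init A \<alpha> = Step p q' \<or> (\<exists>q\<in>states A. trans A q \<alpha> = Step p q')}"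
  have finA: "finite (atoms T)" using assms(1) by (simp add: atoms_def)
  have finR: "finite R"
  proof -
    let ?S = "init A ` atoms T \<union> (\<lambda>(q,\<alpha>). trans A q \<alpha>) ` (states A \<times> atoms T)"
    let ?f = "\<lambda>r. case r of Step p q \<Rightarrow> (p,q) | _ \<Rightarrow> undefined"
    have "finite (states A)" using wf by (simp add: wf_aut_def)
    then have "finite ?S" using finA by auto
    moreover have "R \<subseteq> ?f ` ?S"
    proof
      fix x assume "x \<in> R"
      then obtain p q' \<alpha> where x: "x = (p,q')" "\<alpha>\<in>atoms T"
          "init A \<alpha> = Step p q' \<or> (\<exists>q\<in>states A. trans A q \<alpha> = Step p q')"
        unfolding R_def by blast
      then have "Step p q' \<in> ?S" by force
      then show "x \<in> ?f ` ?S" using x by (intro image_eqI[where x="Step p q'"]) auto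
    qed
    ultimately show ?thesis by (meson finite_imageI finite_subset)
  qed
  have Rst: "q \<in> states A" if pqR: "(p,q) \<in> R" for p q
  proof -
    obtain \<alpha> where a: "\<alpha>\<in>atoms T" "init A \<alpha> = Step p q \<or> (\<exists>q0\<in>states A. trans A q0 \<alpha> = Step p q)"
      using pqR unfolding R_def by blast
    then show ?thesis using wf unfolding wf_aut_def res_ok_def by metis
  qed
  obtain xs where xs: "set xs = R" using finite_list[OF finR] by metis
  define n where "n = length xs"
  define k where "k = Suc n"
  define G where "G i = (if i = 0 then init A else if i \<le> n then trans A (snd (xs!(i-1))) else (\<lambda>_. Reject))" for i
  define idx where "idx pq = Suc (LEAST j. j < n \<and> xs!j = pq)" for pq
  define code where "code i \<alpha> = (case G i \<alpha> of Accept \<Rightarrow> 0 | Reject \<Rightarrow> Suc k | Step p q \<Rightarrow> idx (p,q))" for i \<alpha>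
  define tt where "tt = (\<lambda>(i,j). SOME b. bvars b \<subseteq> T \<and> (\<forall>\<alpha>\<in>atoms T. holds \<alpha> b = (code i \<alpha> = j)))"
  define s where "s = (\<lambda>j::nat. \<lparr>states = {1::nat}, trans = \<lambda>(_::nat) (_::'t set). (Accept::('a,nat) res),
                                 init = \<lambda>_. Step (fst (xs!(j-1))) (1::nat)\<rparr>)"
  have tt_prop: "bvars (tt (i,j)) \<subseteq> T \<and> (\<forall>\<alpha>\<in>atoms T. holds \<alpha> (tt (i,j)) = (code i \<alpha> = j))" for i j
    unfolding tt_def using someI_ex[OF exists_bexp[OF assms(1), of "\<lambda>\<alpha>. code i \<alpha> = j"]] by simp
  have tt_holds: "\<alpha>\<in>atoms T \<Longrightarrow> holds \<alpha> (tt (i,j)) = (code i \<alpha> = j)" for \<alpha> i j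
    using tt_prop by blast
  have idx: "1 \<le> idx pq \<and> idx pq \<le> n \<and> xs!(idx pq - 1) = pq" if pqm: "pq \<in> set xs" for pq
  proof -
    obtain j where "j < n" "xs!j = pq" using pqm by (auto simp: in_set_conv_nth n_def)
    then have "(LEAST j. j<n \<and> xs!j = pq) < n \<and> xs!(LEAST j. j<n \<and> xs!j = pq) = pq"
      by (metis (mono_tags, lifting) LeastI)
    thus ?thesis by (simp add: idx_def)
  qed
  have Gstep: "(p,q) \<in> set xs" if "i \<le> n" "\<alpha>\<in>atoms T" "G i \<alpha> = Step p q" for i \<alpha> p q
  proof (cases "i = 0")
    case True
    then show ?thesis using that xs unfolding R_def G_def by auto
  next
    case False
    then have "xs!(i-1) \<in> set xs" using that(1) by (simp add: n_def)
    then have "snd (xs!(i-1)) \<in> states A" using xs Rst by (metis prod.collapse)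
    moreover have "trans A (snd (xs!(i-1))) \<alpha> = Step p q" using that False by (simp add: G_def)
    ultimately show ?thesis using that(2) xs unfolding R_def by blast
  qed
  have Gidx: "G (idx (p,q)) = trans A q" if "(p,q) \<in> set xs" for p q
    using idx[OF that] by (simp add: G_def)
  have tinv_mem: "\<forall>j\<le>k. ((i,j) \<in> tinv (free_tests k) tt \<alpha>) = (code i \<alpha> = j)"
    if "\<alpha>\<in>atoms T" "i \<le> k" for \<alpha> i
    using that by (auto simp: tinv_def free_tests_def tt_holds)
  have fg: "free_gamma k i (tinv (free_tests k) tt \<alpha>) = (case G i \<alpha> of Accept \<Rightarrow> Accept | Reject \<Rightarrow> Reject
              | Step p q \<Rightarrow> Step (idx (p,q)) (idx (p,q)))"
    if a: "\<alpha>\<in>atoms T" and i: "i \<le> n" for \<alpha> i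
  proof -
    have "free_gamma k i (tinv (free_tests k) tt \<alpha>) =
       (if code i \<alpha> = 0 then Accept else if code i \<alpha> \<le> k then Step (code i \<alpha>) (code i \<alpha>) else Reject)"
      by (rule free_gamma_code) (use tinv_mem[OF a, of i] i in \<open>simp add: k_def\<close>)
    moreover have "\<And>p q. G i \<alpha> = Step p q \<Longrightarrow> 1 \<le> idx (p,q) \<and> idx (p,q) \<le> n"
      using idx Gstep[OF i a] by blast
    ultimately show ?thesis by (cases "G i \<alpha>") (auto simp: code_def k_def)
  qed
  have noacc: "\<forall>p \<alpha>. init (s p) \<alpha> \<noteq> Accept" by (simp add: s_def)
  define F where "F = compose_t (free_tests k) tt (free_aut k)"
  define CC where "CC = compose_st {1..k} (free_tests k) s tt (free_aut k)"
  have transF: "trans F i \<beta> = free_gamma k i (tinv (free_tests k) tt \<beta>)" for i \<beta>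
    by (simp add: F_def compose_t_def free_aut_def)
  have initF: "init F \<beta> = free_gamma k 0 (tinv (free_tests k) tt \<beta>)" for \<beta>
    by (simp add: F_def compose_t_def free_aut_def)
  have CC_init: "init CC \<alpha> = (case free_gamma k 0 (tinv (free_tests k) tt \<alpha>) of Accept \<Rightarrow> Accept
      | Step p' q \<Rightarrow> (case init (s p') \<alpha> of Step p'' qp \<Rightarrow> Step p'' (p', qp, q) | _ \<Rightarrow> Reject)
      | Reject \<Rightarrow> Reject)" for \<alpha>
    unfolding CC_def compose_st_def F_def[symmetric]
    by (simp add: compose_s_def hat_iota_noskip[OF noacc] initF)
  have CC_trans: "trans CC (j', x, i) \<alpha> = (case free_gamma k i (tinv (free_tests k) tt \<alpha>) of Accept \<Rightarrow> Accept
      | Step p' q \<Rightarrow> (case init (s p') \<alpha> of Step p'' qp \<Rightarrow> Step p'' (p', qp, q) | _ \<Rightarrow> Reject)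
      | Reject \<Rightarrow> Reject)" for j' x i \<alpha>
  proof -
    have hd: "hat_delta F s i \<alpha> = free_gamma k i (tinv (free_tests k) tt \<alpha>)"
      by (subst hat_delta_noskip[OF noacc]) (rule transF)
    have st: "\<And>y. trans (s j') y \<alpha> = Accept" by (simp add: s_def)
    show ?thesis unfolding CC_def compose_st_def F_def[symmetric] by (simp add: compose_s_def hd st)
  qed
  define GC where "GC i = (if i = 0 then init CC else trans CC (i,1,i))" for i
  have key: "GC i \<alpha> = (case G i \<alpha> of Accept \<Rightarrow> Accept | Reject \<Rightarrow> Reject
              | Step p q \<Rightarrow> Step p (idx (p,q), 1, idx (p,q)))"
    if a: "\<alpha>\<in>atoms T" and i: "i \<le> n" for \<alpha> i
  proof -
    have gc: "GC i \<alpha> = (case free_gamma k i (tinv (free_tests k) tt \<alpha>) of Accept \<Rightarrow> Accept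
      | Step p' q \<Rightarrow> (case init (s p') \<alpha> of Step p'' qp \<Rightarrow> Step p'' (p', qp, q) | _ \<Rightarrow> Reject)
      | Reject \<Rightarrow> Reject)"
      by (cases "i = 0") (simp_all add: GC_def CC_init CC_trans)
    show ?thesis
    proof (cases "G i \<alpha>")
      case (Step p q)
      have mem: "(p,q) \<in> set xs" using Gstep[OF i a Step] .
      have "init (s (idx (p,q))) \<alpha> = Step p 1" using idx[OF mem] by (simp add: s_def)
      then show ?thesis using gc fg[OF a i] Step by simp
    qed (use gc fg[OF a i] in simp_all)
  qed
  have fw: "lang_from T (trans A) g w \<Longrightarrow> i \<le> n \<Longrightarrow> g = G i \<Longrightarrow> lang_from T (trans CC) (GC i) w"
    for g w i
  proof (induction arbitrary: i rule: lang_from.induct)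
    case (acc \<alpha> \<gamma>)
    have "GC i \<alpha> = Accept" using key[OF acc.hyps(1) acc.prems(1)] acc by simp
    then show ?case using acc.hyps(1) by (intro lang_from.acc)
  next
    case (step \<alpha> \<gamma> p q w)
    have mem: "(p,q) \<in> set xs" using Gstep[OF step.prems(1) step.hyps(1)] step by simp
    define j where "j = idx (p,q)"
    have j: "1 \<le> j" "j \<le> n" using idx[OF mem] by (auto simp: j_def)
    have "trans A q = G j" using Gidx[OF mem] by (simp add: j_def)
    then have IH: "lang_from T (trans CC) (GC j) w" using step.IH j(2) by blast
    have gcj: "GC j = trans CC (j,1,j)" using j by (simp add: GC_def)
    have "GC i \<alpha> = Step p (j,1,j)" using key[OF step.hyps(1) step.prems(1)] step by (simp add: j_def)
    moreover have "lang_from T (trans CC) (trans CC (j,1,j)) w" using IH gcj by simp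
    ultimately show ?case by (rule lang_from.step[where \<gamma>="GC i", OF step.hyps(1)])
  qed
  have bw: "lang_from T (trans CC) g w \<Longrightarrow> i \<le> n \<Longrightarrow> g = GC i \<Longrightarrow> lang_from T (trans A) (G i) w"
    for g w i
  proof (induction arbitrary: i rule: lang_from.induct)
    case (acc \<alpha> \<gamma>)
    have "G i \<alpha> = Accept" using key[OF acc.hyps(1) acc.prems(1)] acc by (cases "G i \<alpha>") auto
    then show ?case using acc.hyps(1) by (intro lang_from.acc)
  next
    case (step \<alpha> \<gamma> p st w)
    have k1: "GC i \<alpha> = Step p st" using step by simp
    show ?case
    proof (cases "G i \<alpha>")
      case (Step p0 q)
      have mem: "(p0,q) \<in> set xs" using Gstep[OF step.prems(1) step.hyps(1) Step] .
      define j where "j = idx (p0,q)"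
      have j: "1 \<le> j" "j \<le> n" using idx[OF mem] by (auto simp: j_def)
      have "GC i \<alpha> = Step p0 (j,1,j)" using key[OF step.hyps(1) step.prems(1)] Step by (simp add: j_def)
      then have "Step p st = Step p0 (j,1,j)" using k1 by simp
      then have pp: "p = p0" "st = (j,1,j)" by simp_all
      have "trans CC st = GC j" using j pp by (simp add: GC_def)
      then have "lang_from T (trans A) (G j) w" using step.IH j(2) by blast
      then have "lang_from T (trans A) (trans A q) w" using Gidx[OF mem] by (simp add: j_def)
      from lang_from.step[where \<gamma>="G i", OF step.hyps(1) Step this] pp
      show ?thesis by simp
    qed (use k1 key[OF step.hyps(1) step.prems(1)] in simp_all)
  qed
  have c3: "lang T A = lang T CC"
  proof -
    have G0: "G 0 = init A" unfolding G_def by (rule if_P) (rule refl)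
    have GC0: "GC 0 = init CC" by (simp add: GC_def)
    have e1: "lang_from T (trans CC) (init CC) w" if "lang_from T (trans A) (init A) w" for w
    proof -
      have "lang_from T (trans CC) (GC 0) w" by (rule fw[OF that]) (simp_all add: G0)
      then show ?thesis unfolding GC0 .
    qed
    have e2: "lang_from T (trans A) (init A) w" if "lang_from T (trans CC) (init CC) w" for w
    proof -
      have "lang_from T (trans A) (G 0) w" by (rule bw[OF that]) (simp_all add: GC0)
      then show ?thesis unfolding G0 .
    qed
    show ?thesis unfolding lang_def using e1 e2 by auto
  qed
  have c1: "\<forall>x \<in> free_tests k. bvars (tt x) \<subseteq> T"
  proof
    fix x :: "nat \<times> nat" obtain i j where "x = (i,j)" by (cases x)
    then show "bvars (tt x) \<subseteq> T" using tt_prop by simp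
  qed
  have c2: "\<forall>p \<in> {1..k}. wf_aut UNIV T (s p) \<and> (\<exists>p'. lang T (s p) = prim_lang T p')"
  proof
    fix p :: nat
    have "wf_aut UNIV T (s p) \<and> lang T (s p) = prim_lang T (fst (xs!(p-1)))"
      using single_aut[where a="fst (xs!(p-1))" and T=T] unfolding s_def by simp
    then show "wf_aut UNIV T (s p) \<and> (\<exists>p'. lang T (s p) = prim_lang T p')" by blast
  qed
  show ?thesis
    apply (rule exI[of _ k], rule conjI, simp add: k_def, rule exI[of _ tt], rule exI[of _ s])
    using c1 c2 c3 unfolding CC_def by blast
qed

end
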